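(* Let $\boldsymbol a\in\mathbb R^d$ be a unit vector, $\mathcal V=\{\boldsymbol v\in\mathbb R^d:\boldsymbol v^\top\boldsymbol a=1\}$, and $s\mathcal V=\{s\boldsymbol v:\boldsymbol v\in\mathcal V\}$. Let $m\in\mathbb N$, let $\boldsymbol X_1,\dots,\boldsymbol X_m$ be i.i.d. random vectors in $\mathbb R^d$ with $\|\boldsymbol X_1\|_2\le B$ almost surely for a constant $B>0$, and let $\varepsilon_1,\dots,\varepsilon_m$ be i.i.d. Rademacher variables independent of $(\boldsymbol X_i)$. Let $\mathbf X$ be the $d\times m$ matrix with columns $\boldsymbol X_i$, $\boldsymbol\varepsilon=(\varepsilon_1,\dots,\varepsilon_m)$, and $G(\boldsymbol w)=\boldsymbol w^\top\mathbf X\boldsymbol\varepsilon-\|\boldsymbol w\|_2^2/2$. Let $B_{\boldsymbol a^\top\boldsymbol X}$ be the smallest constant such that $|\boldsymbol a^\top\boldsymbol X_1|\le B_{\boldsymbol a^\top\boldsymbol X}$ almost surely. Then for any positive constants $s,\mu$ with $8\mu mB^2\le1$, $$\mathbb E\Big[\sup_{\boldsymbol w\in s\mathcal V}e^{\mu G(\boldsymbol w)}\Big]\le\exp\big\{(ms^2B_{\boldsymbol a^\top\boldsymbol X}^2)\mu^2+(5mB^2-s^2/2)\mu\big\}.$$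
   Context: A Rademacher variable takes values $\pm1$ with probability $1/2$ each. *)

theory Defs
  imports "HOL-Probability.Probability"
begin

definition rademacher :: "'a measure \<Rightarrow> ('a \<Rightarrow> real) \<Rightarrow> bool" where
  "rademacher M e \<longleftrightarrow> e \<in> borel_measurable M \<and>
     measure M {\<omega> \<in> space M. e \<omega> = 1} = 1/2 \<and>
     measure M {\<omega> \<in> space M. e \<omega> = -1} = 1/2"

definition ess_bound :: "'a measure \<Rightarrow> ('a \<Rightarrow> real) \<Rightarrow> real" where
  "ess_bound M f = Inf {c. AE \<omega> in M. f \<omega> \<le> c}"

definition Gfun :: "nat \<Rightarrow> (nat \<Rightarrow> 'a \<Rightarrow> real^'d) \<Rightarrow> (nat \<Rightarrow> 'a \<Rightarrow> real) \<Rightarrow> real^'d \<Rightarrow> 'a \<Rightarrow> real" where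
  "Gfun m X eps w \<omega> = w \<bullet> (\<Sum>i<m. eps i \<omega> *\<^sub>R X i \<omega>) - (norm w)\<^sup>2 / 2"

end

theory Submission
  imports Defs
begin

lemma two_pow_fact_le: "(2::real)^k * fact k \<le> fact (2*k)"
proof (induction k)
  case 0 then show ?case by simp
next
  case (Suc k)
  have "(2::real)^Suc k * fact (Suc k) = 2 * (real k + 1) * (2^k * fact k)"
    by (simp add: algebra_simps)
  also have "\<dots> \<le> (2 * real k + 2) * (2 * real k + 1) * fact (2*k)"
  proof -
    have "2 * (real k + 1) \<le> (2 * real k + 2) * (2 * real k + 1)" by (simp add: algebra_simps)
    then show ?thesis using Suc by (intro mult_mono) auto
  qed
  also have "\<dots> = fact (2 * Suc k)"
    by (simp add: fact_Suc algebra_simps)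
  finally show ?case .
qed

lemma cosh_le_exp_sq: "(exp (t::real) + exp (-t)) / 2 \<le> exp (t^2/2)"
proof -
  have c: "(\<lambda>n. if even n then t ^ n /\<^sub>R fact n else 0) sums cosh t" by (rule cosh_converges)
  have e: "(\<lambda>n. (t^2/2) ^ n /\<^sub>R fact n) sums exp (t^2/2)" by (rule exp_converges)
  have e2: "(\<lambda>n. if even n then (t^2/2) ^ (n div 2) /\<^sub>R fact (n div 2) else 0) sums exp (t^2/2)"
    using sums_if[OF sums_zero e] by simp
  have "cosh t \<le> exp (t^2/2)"
  proof (rule sums_le[OF _ c e2])
    fix n
    show "(if even n then t ^ n /\<^sub>R fact n else 0) \<le> (if even n then (t^2/2) ^ (n div 2) /\<^sub>R fact (n div 2) else 0)"
    proof (cases "even n")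
      case True
      then obtain k where n: "n = 2*k" by blast
      have tn: "t ^ n = (t^2)^k" unfolding n by (rule power_mult)
      have l: "t ^ n /\<^sub>R fact n = (t^2)^k / fact (2*k)"
        unfolding tn by (simp add: n divide_inverse mult.commute)
      have r: "(t^2/2) ^ (n div 2) /\<^sub>R fact (n div 2) = (t^2)^k / (2^k * fact k)"
      proof -
        have nk: "n div 2 = k" by (simp add: n)
        show ?thesis unfolding nk power_divide by (simp add: field_simps)
      qed
      have p: "0 \<le> (t^2)^k" by simp
      have q: "0 < (2::real)^k * fact k" by simp
      have "(t^2)^k / fact (2*k) \<le> (t^2)^k / (2^k * fact k)"
        by (rule divide_left_mono[OF two_pow_fact_le p]) (use q in simp)
      then show ?thesis using True l r by simp
    qed simp
  qed
  then show ?thesis by (simp add: cosh_def)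
qed


definition phi :: "real \<Rightarrow> real^'d \<Rightarrow> real \<Rightarrow> real^'d \<Rightarrow> real" where
  "phi \<alpha> a c y = \<alpha> * (a \<bullet> y) + c * (norm y)^2"

lemma step_pointwise:
  fixes x y a :: "real^'d"
  assumes c: "0 \<le> c" "c \<le> \<mu>" and x: "norm x \<le> B" "\<bar>a \<bullet> x\<bar> \<le> Ba"
  shows "(exp (phi \<alpha> a c (y + x)) + exp (phi \<alpha> a c (y + - x))) / 2
     \<le> exp (\<alpha>^2 * Ba^2 + \<mu> * B^2) * exp (phi \<alpha> a (c * (1 + 4*c*B^2)) y)"
proof -
  define t where "t = \<alpha> * (a \<bullet> x) + 2 * c * (x \<bullet> y)"
  define P where "P = phi \<alpha> a c y + c * (norm x)^2"
  have n1: "(norm (y + x))^2 = (norm y)^2 + 2 * (x \<bullet> y) + (norm x)^2"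
    by (simp add: power2_norm_eq_inner inner_add_left inner_add_right inner_commute)
  have n2: "(norm (y + - x))^2 = (norm y)^2 - 2 * (x \<bullet> y) + (norm x)^2"
    by (simp add: power2_norm_eq_inner inner_diff_left inner_diff_right inner_commute)
  have p1: "phi \<alpha> a c (y + x) = P + t"
    unfolding phi_def P_def t_def n1 by (simp add: inner_add_right algebra_simps)
  have p2: "phi \<alpha> a c (y + - x) = P - t"
    unfolding phi_def P_def t_def n2 by (simp add: inner_add_right algebra_simps)
  have "(exp (phi \<alpha> a c (y + x)) + exp (phi \<alpha> a c (y + - x))) / 2
        = exp P * ((exp t + exp (-t)) / 2)"
    unfolding p1 p2 by (simp add: exp_add exp_diff exp_minus field_simps)
  also have "\<dots> \<le> exp P * exp (t^2/2)"
    by (intro mult_left_mono cosh_le_exp_sq) simp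
  also have "\<dots> = exp (P + t^2/2)" by (simp add: exp_add)
  also have "\<dots> \<le> exp (\<alpha>^2 * Ba^2 + \<mu> * B^2 + phi \<alpha> a (c * (1 + 4*c*B^2)) y)"
  proof (subst exp_le_cancel_iff)
    have B0: "0 \<le> B" using x(1) norm_ge_zero order_trans by blast
    have h1: "t^2/2 \<le> (\<alpha> * (a \<bullet> x))^2 + (2 * c * (x \<bullet> y))^2"
      unfolding t_def using sum_squares_ge_zero[of "\<alpha> * (a \<bullet> x) - 2 * c * (x \<bullet> y)" 0]
      by (simp add: power2_eq_square algebra_simps)
    have ax: "(a \<bullet> x)^2 \<le> Ba^2"
      using power_mono[OF x(2), of 2] by simp
    have h2: "(\<alpha> * (a \<bullet> x))^2 \<le> \<alpha>^2 * Ba^2"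
      using ax by (simp add: power_mult_distrib mult_left_mono)
    have xx: "(norm x)^2 \<le> B^2" using power_mono[OF x(1), of 2] by simp
    have xy: "(x \<bullet> y)^2 \<le> B^2 * (norm y)^2"
    proof -
      have "(x \<bullet> y)^2 \<le> (x \<bullet> x) * (y \<bullet> y)" by (rule Cauchy_Schwarz_ineq)
      also have "\<dots> = (norm x)^2 * (norm y)^2" by (simp add: power2_norm_eq_inner)
      also have "\<dots> \<le> B^2 * (norm y)^2" by (intro mult_right_mono xx) simp
      finally show ?thesis .
    qed
    have h3: "(2 * c * (x \<bullet> y))^2 \<le> 4 * c^2 * B^2 * (norm y)^2"
    proof -
      have "(2 * c * (x \<bullet> y))^2 = 4 * c^2 * (x \<bullet> y)^2" by (simp add: power_mult_distrib)
      also have "\<dots> \<le> 4 * c^2 * (B^2 * (norm y)^2)" by (intro mult_left_mono xy) simp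
      finally show ?thesis by simp
    qed
    have h4: "c * (norm x)^2 \<le> \<mu> * B^2"
      by (rule mult_mono[OF c(2) xx]) (use c in auto)
    show "P + t\<^sup>2 / 2 \<le> \<alpha>\<^sup>2 * Ba\<^sup>2 + \<mu> * B\<^sup>2 + phi \<alpha> a (c * (1 + 4 * c * B\<^sup>2)) y"
      using h1 h2 h3 h4 unfolding P_def phi_def by (simp add: algebra_simps power2_eq_square)
  qed
  also have "\<dots> = exp (\<alpha>^2 * Ba^2 + \<mu> * B^2) * exp (phi \<alpha> a (c * (1 + 4*c*B^2)) y)"
    by (simp add: exp_add)
  finally show ?thesis .
qed



lemma rademacher_AE:
  assumes P: "prob_space M" and r: "rademacher M e"
  shows "AE \<omega> in M. e \<omega> = 1 \<or> e \<omega> = -1"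
proof -
  interpret prob_space M by fact
  have em[measurable]: "e \<in> borel_measurable M" using r by (simp add: rademacher_def)
  define A where "A = {\<omega> \<in> space M. e \<omega> = 1}"
  define B where "B = {\<omega> \<in> space M. e \<omega> = -1}"
  have m1: "prob A = 1/2" and m2: "prob B = 1/2"
    using r by (auto simp: rademacher_def A_def B_def)
  have As: "A \<in> sets M" unfolding A_def by measurable
  have Bs: "B \<in> sets M" unfolding B_def by measurable
  have dis: "A \<inter> B = {}" unfolding A_def B_def by auto
  have "prob (A \<union> B) = prob A + prob B"
    by (rule finite_measure_Union[OF As Bs dis])
  also have "\<dots> = 1" using m1 m2 by simp
  finally have "prob (A \<union> B) = 1" .
  then have "AE \<omega> in M. \<omega> \<in> A \<union> B"
    by (rule AE_prob_1)
  then show ?thesis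
    by (rule eventually_mono) (auto simp: A_def B_def)
qed

lemma rademacher_nn_integral:
  fixes h :: "real \<Rightarrow> ennreal"
  assumes P: "prob_space M" and r: "rademacher M e" and h[measurable]: "h \<in> borel_measurable borel"
  shows "(\<integral>\<^sup>+ t. h t \<partial>distr M borel e) = ennreal (1/2) * h 1 + ennreal (1/2) * h (-1)"
proof -
  interpret prob_space M by fact
  have em[measurable]: "e \<in> borel_measurable M" using r by (simp add: rademacher_def)
  define A where "A = {\<omega> \<in> space M. e \<omega> = 1}"
  define B where "B = {\<omega> \<in> space M. e \<omega> = -1}"
  have m1: "prob A = 1/2" and m2: "prob B = 1/2"
    using r by (auto simp: rademacher_def A_def B_def)
  have As: "A \<in> sets M" unfolding A_def by measurable
  have Bs: "B \<in> sets M" unfolding B_def by measurable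
  have "(\<integral>\<^sup>+ t. h t \<partial>distr M borel e) = (\<integral>\<^sup>+ \<omega>. h (e \<omega>) \<partial>M)"
    by (rule nn_integral_distr) simp_all
  also have "\<dots> = (\<integral>\<^sup>+ \<omega>. h 1 * indicator A \<omega> + h (-1) * indicator B \<omega> \<partial>M)"
  proof (rule nn_integral_cong_AE)
    show "AE \<omega> in M. h (e \<omega>) = h 1 * indicator A \<omega> + h (-1) * indicator B \<omega>"
      using rademacher_AE[OF P r] AE_space
    proof (rule eventually_elim2)
      fix \<omega> assume a: "e \<omega> = 1 \<or> e \<omega> = -1" and sp: "\<omega> \<in> space M"
      show "h (e \<omega>) = h 1 * indicator A \<omega> + h (-1) * indicator B \<omega>"
      proof (cases "e \<omega> = 1")
        case True
        then have "\<omega> \<in> A" "\<omega> \<notin> B" using sp by (auto simp: A_def B_def)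
        then show ?thesis using True by simp
      next
        case False
        then have "e \<omega> = -1" using a by simp
        then have "\<omega> \<notin> A" "\<omega> \<in> B" using sp by (auto simp: A_def B_def)
        then show ?thesis using \<open>e \<omega> = -1\<close> by simp
      qed
    qed
  qed
  also have "\<dots> = (\<integral>\<^sup>+ \<omega>. h 1 * indicator A \<omega> \<partial>M) + (\<integral>\<^sup>+ \<omega>. h (-1) * indicator B \<omega> \<partial>M)"
    by (rule nn_integral_add) (use As Bs in auto)
  also have "\<dots> = h 1 * emeasure M A + h (-1) * emeasure M B"
    using As Bs by (simp add: nn_integral_cmult_indicator)
  also have "\<dots> = ennreal (1/2) * h 1 + ennreal (1/2) * h (-1)"
    unfolding emeasure_eq_measure m1 m2 by (simp only: mult.commute)
  finally show ?thesis .
qed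


lemma AE_le_ess_bound:
  fixes f :: "'a \<Rightarrow> real"
  assumes P: "prob_space M" and f0: "\<And>\<omega>. 0 \<le> f \<omega>" and C: "AE \<omega> in M. f \<omega> \<le> C"
  shows "AE \<omega> in M. f \<omega> \<le> ess_bound M f"
proof -
  interpret prob_space M by fact
  define S where "S = {c. AE \<omega> in M. f \<omega> \<le> c}"
  have ne: "S \<noteq> {}" using C by (auto simp: S_def)
  have bdd: "bdd_below S"
  proof (rule bdd_belowI[of _ 0])
    fix c assume "c \<in> S"
    then have "AE \<omega> in M. f \<omega> \<le> c" by (simp add: S_def)
    show "0 \<le> c"
    proof (rule ccontr)
      assume "\<not> 0 \<le> c"
      have "AE \<omega> in M. False" using \<open>AE \<omega> in M. f \<omega> \<le> c\<close>
        by (rule eventually_mono) (metis f0 \<open>\<not> 0 \<le> c\<close> order_trans)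
      then show False by simp
    qed
  qed
  have "\<forall>n::nat. AE \<omega> in M. f \<omega> \<le> Inf S + 1 / real (Suc n)"
  proof
    fix n :: nat
    have "Inf S < Inf S + 1 / real (Suc n)" by simp
    from cInf_lessD[OF ne this] obtain c where "c \<in> S" "c < Inf S + 1 / real (Suc n)" by blast
    then show "AE \<omega> in M. f \<omega> \<le> Inf S + 1 / real (Suc n)"
      by (auto simp: S_def elim!: eventually_mono)
  qed
  then have "AE \<omega> in M. \<forall>n::nat. f \<omega> \<le> Inf S + 1 / real (Suc n)"
    by (simp add: AE_all_countable)
  then show ?thesis
  proof (rule eventually_mono)
    fix \<omega> assume H: "\<forall>n::nat. f \<omega> \<le> Inf S + 1 / real (Suc n)"
    show "f \<omega> \<le> ess_bound M f"
    proof (rule ccontr)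
      assume "\<not> f \<omega> \<le> ess_bound M f"
      then have "0 < f \<omega> - Inf S" by (simp add: ess_bound_def S_def)
      then obtain n where "inverse (real (Suc n)) < f \<omega> - Inf S"
        using reals_Archimedean by blast
      with H[rule_format, of n] show False by (simp add: field_simps)
    qed
  qed
qed



lemma funpow_bound:
  fixes c B :: real
  defines "g \<equiv> \<lambda>x. x * (1 + 4 * x * B^2)"
  assumes c: "0 \<le> c" and r2: "(1 + 8 * c * B^2)^m \<le> 2"
  shows "k \<le> m \<Longrightarrow> 0 \<le> (g ^^ k) c \<and> (g ^^ k) c \<le> c * (1 + 8 * c * B^2)^k"
proof (induction k)
  case 0 then show ?case using c by simp
next
  case (Suc k)
  define r where "r = 1 + 8 * c * B^2"
  have r1: "1 \<le> r" using c by (simp add: r_def)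
  have rk: "r^k \<le> 2"
    using r2 power_increasing[OF _ r1, of k m] Suc.prems unfolding r_def by simp
  have rk1: "1 \<le> r^k" using r1 by simp
  from Suc have ih: "0 \<le> (g ^^ k) c" "(g ^^ k) c \<le> c * r^k" by (auto simp: r_def)
  let ?x = "(g ^^ k) c"
  have "(g ^^ Suc k) c = ?x * (1 + 4 * ?x * B^2)" by (simp add: g_def)
  also have "\<dots> \<le> (c * r^k) * (1 + 4 * (c * r^k) * B^2)"
    using ih c rk1 by (intro mult_mono add_left_mono mult_right_mono) (auto simp: r_def)
  also have "\<dots> \<le> (c * r^k) * (1 + 8 * c * B^2)"
  proof -
    have "4 * (c * r^k) * B^2 \<le> 4 * (c * 2) * B^2"
      using rk c by (intro mult_right_mono mult_left_mono) auto
    then show ?thesis using c rk1 by (intro mult_left_mono) auto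
  qed
  also have "\<dots> = c * r ^ Suc k" by (simp add: r_def)
  finally have "(g ^^ Suc k) c \<le> c * (1 + 8 * c * B^2) ^ Suc k" by (simp add: r_def)
  moreover have "0 \<le> (g ^^ Suc k) c" using ih by (simp add: g_def)
  ultimately show ?case by simp
qed




lemma Y_meas:
  fixes N :: "nat \<Rightarrow> ((real^'d) \<times> real) measure"
  assumes sets: "\<And>i. sets (N i) = sets borel" and nI: "{..<n} \<subseteq> I"
  shows "(\<lambda>z. \<Sum>i<n. snd (z i) *\<^sub>R fst (z i)) \<in> borel_measurable (PiM I N)"
proof (rule borel_measurable_sum)
  fix i assume "i \<in> {..<n}"
  then have iI: "i \<in> I" using nI by auto
  have eqm: "measurable (PiM I N) (N i) = measurable (PiM I N) (borel \<Otimes>\<^sub>M borel)"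
    by (rule measurable_cong_sets) (simp_all add: sets, subst borel_prod, simp)
  have c: "(\<lambda>z. z i) \<in> measurable (PiM I N) (borel \<Otimes>\<^sub>M borel)"
    using measurable_component_singleton[OF iI, of N] eqm by simp
  have "(\<lambda>z. snd (z i)) \<in> borel_measurable (PiM I N)"
    using measurable_compose[OF c measurable_snd] by simp
  moreover have "(\<lambda>z. fst (z i)) \<in> borel_measurable (PiM I N)"
    using measurable_compose[OF c measurable_fst] by simp
  ultimately show "(\<lambda>z. snd (z i) *\<^sub>R fst (z i)) \<in> borel_measurable (PiM I N)"
    by (rule borel_measurable_scaleR)
qed

lemma phi_meas: "(\<lambda>y. ennreal (exp (phi \<alpha> a c y))) \<in> borel_measurable borel"
  unfolding phi_def by measurable


lemma g_infl:
  fixes c B :: real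
  assumes "0 \<le> c"
  shows "0 \<le> ((\<lambda>x. x * (1 + 4 * x * B^2)) ^^ k) c \<and> c \<le> ((\<lambda>x. x * (1 + 4 * x * B^2)) ^^ k) c"
proof (induction k)
  case 0 then show ?case using assms by simp
next
  case (Suc k)
  let ?x = "((\<lambda>x. x * (1 + 4 * x * B^2)) ^^ k) c"
  have e: "?x * (1 + 4 * ?x * B^2) = ?x + 4 * B^2 * ?x^2" by (simp add: algebra_simps power2_eq_square)
  have "0 \<le> 4 * B^2 * ?x^2" by simp
  then have "?x \<le> ?x * (1 + 4 * ?x * B^2)" unfolding e by linarith
  then show ?case using Suc by simp
qed

lemma prod_induct:
  fixes N :: "nat \<Rightarrow> ((real^'d) \<times> real) measure" and a :: "real^'d"
  assumes PS: "\<And>i. prob_space (N i)" and sets: "\<And>i. sets (N i) = sets borel"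
    and stepN: "\<And>i y c. i < m \<Longrightarrow> 0 \<le> c \<Longrightarrow> c \<le> \<mu> \<Longrightarrow>
       (\<integral>\<^sup>+ p. ennreal (exp (phi \<alpha> a c (y + snd p *\<^sub>R fst p))) \<partial>N i)
         \<le> ennreal (exp K * exp (phi \<alpha> a (c * (1 + 4 * c * B^2)) y))"
  shows "n \<le> m \<Longrightarrow> 0 \<le> c \<Longrightarrow> ((\<lambda>x. x * (1 + 4 * x * B^2)) ^^ n) c \<le> \<mu> \<Longrightarrow>
    (\<integral>\<^sup>+ z. ennreal (exp (phi \<alpha> a c (\<Sum>i<n. snd (z i) *\<^sub>R fst (z i)))) \<partial>PiM {..<n} N)
      \<le> ennreal (exp (real n * K))"
proof (induction n arbitrary: c)
  case 0
  have "prob_space (PiM {} N)" by (rule prob_space_PiM) (rule PS)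
  then have "emeasure (PiM {} N) (space (PiM {} N)) = 1" by (rule prob_space.emeasure_space_1)
  then show ?case by (simp add: phi_def)
next
  case (Suc n)
  let ?g = "\<lambda>x::real. x * (1 + 4 * x * B^2)"
  interpret product_sigma_finite N
    by (simp add: product_sigma_finite_def PS prob_space_imp_sigma_finite)
  have cmu: "c \<le> \<mu>" using g_infl[OF Suc.prems(2), where B=B and k="Suc n"] Suc.prems(3) by linarith
  have gc0: "0 \<le> ?g c" using g_infl[OF Suc.prems(2), where B=B and k=1] by simp
  have gn: "(?g ^^ n) (?g c) \<le> \<mu>" using Suc.prems(3) by (simp add: funpow_Suc_right del: funpow.simps)
  have sub: "{..<Suc n} \<subseteq> insert n {..<n}" by auto
  have meas: "(\<lambda>z. ennreal (exp (phi \<alpha> a c (\<Sum>i<Suc n. snd (z i) *\<^sub>R fst (z i)))))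
      \<in> borel_measurable (PiM (insert n {..<n}) N)"
    using measurable_compose[OF Y_meas[where N=N and n="Suc n" and I="insert n {..<n}", OF sets sub] phi_meas[of \<alpha> a c]] by simp
  have meas2: "(\<lambda>z. ennreal (exp (phi \<alpha> a (?g c) (\<Sum>i<n. snd (z i) *\<^sub>R fst (z i)))))
      \<in> borel_measurable (PiM {..<n} N)"
    using measurable_compose[OF Y_meas[where N=N and n=n and I="{..<n}", OF sets order.refl] phi_meas[of \<alpha> a "?g c"]] by simp
  have "(\<integral>\<^sup>+ z. ennreal (exp (phi \<alpha> a c (\<Sum>i<Suc n. snd (z i) *\<^sub>R fst (z i)))) \<partial>PiM {..<Suc n} N)
      = (\<integral>\<^sup>+ x. (\<integral>\<^sup>+ y. ennreal (exp (phi \<alpha> a c (\<Sum>i<Suc n. snd ((x(n := y)) i) *\<^sub>R fst ((x(n := y)) i)))) \<partial>N n) \<partial>PiM {..<n} N)"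
  proof -
    have eqP: "PiM {..<Suc n} N = PiM (insert n {..<n}) N" by (simp add: lessThan_Suc)
    show ?thesis unfolding eqP by (rule product_nn_integral_insert[OF _ _ meas]) auto
  qed
  also have "\<dots> = (\<integral>\<^sup>+ x. (\<integral>\<^sup>+ y. ennreal (exp (phi \<alpha> a c ((\<Sum>i<n. snd (x i) *\<^sub>R fst (x i)) + snd y *\<^sub>R fst y))) \<partial>N n) \<partial>PiM {..<n} N)"
  proof -
    have "(\<Sum>i<Suc n. snd ((x(n := y)) i) *\<^sub>R fst ((x(n := y)) i)) = (\<Sum>i<n. snd (x i) *\<^sub>R fst (x i)) + snd y *\<^sub>R fst y" for x y
    proof -
      have "(\<Sum>i<Suc n. snd ((x(n := y)) i) *\<^sub>R fst ((x(n := y)) i))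
          = (\<Sum>i<n. snd ((x(n := y)) i) *\<^sub>R fst ((x(n := y)) i)) + snd ((x(n := y)) n) *\<^sub>R fst ((x(n := y)) n)"
        by (rule sum.lessThan_Suc)
      also have "(\<Sum>i<n. snd ((x(n := y)) i) *\<^sub>R fst ((x(n := y)) i)) = (\<Sum>i<n. snd (x i) *\<^sub>R fst (x i))"
        by (rule sum.cong) auto
      finally show ?thesis by simp
    qed
    then show ?thesis by simp
  qed
  also have "\<dots> \<le> (\<integral>\<^sup>+ x. ennreal (exp K) * ennreal (exp (phi \<alpha> a (?g c) (\<Sum>i<n. snd (x i) *\<^sub>R fst (x i)))) \<partial>PiM {..<n} N)"
  proof (rule nn_integral_mono)
    fix x
    have "(\<integral>\<^sup>+ y. ennreal (exp (phi \<alpha> a c ((\<Sum>i<n. snd (x i) *\<^sub>R fst (x i)) + snd y *\<^sub>R fst y))) \<partial>N n)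
        \<le> ennreal (exp K * exp (phi \<alpha> a (?g c) (\<Sum>i<n. snd (x i) *\<^sub>R fst (x i))))"
      by (rule stepN) (use Suc.prems cmu in auto)
    also have "\<dots> = ennreal (exp K) * ennreal (exp (phi \<alpha> a (?g c) (\<Sum>i<n. snd (x i) *\<^sub>R fst (x i))))"
      by (rule ennreal_mult) auto
    finally show "(\<integral>\<^sup>+ y. ennreal (exp (phi \<alpha> a c ((\<Sum>i<n. snd (x i) *\<^sub>R fst (x i)) + snd y *\<^sub>R fst y))) \<partial>N n)
        \<le> ennreal (exp K) * ennreal (exp (phi \<alpha> a (?g c) (\<Sum>i<n. snd (x i) *\<^sub>R fst (x i))))" .
  qed
  also have "\<dots> = ennreal (exp K) * (\<integral>\<^sup>+ x. ennreal (exp (phi \<alpha> a (?g c) (\<Sum>i<n. snd (x i) *\<^sub>R fst (x i)))) \<partial>PiM {..<n} N)"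
    by (rule nn_integral_cmult[OF meas2])
  also have "\<dots> \<le> ennreal (exp K) * ennreal (exp (real n * K))"
    by (intro mult_left_mono Suc.IH gc0 gn) (use Suc.prems in auto)
  also have "\<dots> = ennreal (exp (real (Suc n) * K))"
  proof -
    have "exp (real (Suc n) * K) = exp K * exp (real n * K)"
      by (simp add: exp_add[symmetric] algebra_simps)
    then show ?thesis by (simp add: ennreal_mult)
  qed
  finally show ?case .
qed


lemma ennr_half:
  assumes "0 \<le> u" "0 \<le> v"
  shows "ennreal (1/2) * ennreal u + ennreal (1/2) * ennreal v = ennreal ((u + v)/2)"
proof -
  have "ennreal ((u+v)/2) = ennreal (1/2 * u + 1/2 * v)" by (rule arg_cong[where f=ennreal]) (simp add: field_simps)
  also have "\<dots> = ennreal (1/2 * u) + ennreal (1/2 * v)" by (rule ennreal_plus) (use assms in auto)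
  also have "\<dots> = ennreal (1/2) * ennreal u + ennreal (1/2) * ennreal v"
    by (subst (1 2) ennreal_mult) (use assms in auto)
  finally show ?thesis by (rule sym)
qed

lemma stepN_lemma:
  fixes Xi :: "'a \<Rightarrow> real^'d" and a :: "real^'d"
  assumes P: "prob_space M" and Xm[measurable]: "Xi \<in> borel_measurable M" and r: "rademacher M e"
    and eq: "distr M (borel \<Otimes>\<^sub>M borel) (\<lambda>\<omega>. (Xi \<omega>, e \<omega>)) = distr M borel Xi \<Otimes>\<^sub>M distr M borel e"
    and AEx: "AE x in distr M borel Xi. norm x \<le> B \<and> \<bar>a \<bullet> x\<bar> \<le> Ba"
    and c: "0 \<le> c" "c \<le> \<mu>"
  shows "(\<integral>\<^sup>+ p. ennreal (exp (phi \<alpha> a c (y + snd p *\<^sub>R fst p))) \<partial>distr M borel (\<lambda>\<omega>. (Xi \<omega>, e \<omega>)))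
     \<le> ennreal (exp (\<alpha>^2 * Ba^2 + \<mu> * B^2) * exp (phi \<alpha> a (c * (1 + 4 * c * B^2)) y))"
proof -
  interpret prob_space M by fact
  have em[measurable]: "e \<in> borel_measurable M" using r by (simp add: rademacher_def)
  interpret PE: prob_space "distr M borel e" by (rule prob_space_distr) simp
  interpret PX: prob_space "distr M borel Xi" by (rule prob_space_distr) simp
  have eq': "distr M borel (\<lambda>\<omega>. (Xi \<omega>, e \<omega>)) = distr M borel Xi \<Otimes>\<^sub>M distr M borel e"
    using eq by (simp add: borel_prod)
  define h where "h = (\<lambda>p::(real^'d) \<times> real. ennreal (exp (phi \<alpha> a c (y + snd p *\<^sub>R fst p))))"
  have hb: "h \<in> borel_measurable (borel \<Otimes>\<^sub>M borel)"
    unfolding h_def phi_def by measurable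
  have hm: "h \<in> borel_measurable (distr M borel Xi \<Otimes>\<^sub>M distr M borel e)"
  proof -
    have "borel_measurable (distr M borel Xi \<Otimes>\<^sub>M distr M borel e) = borel_measurable (borel \<Otimes>\<^sub>M borel)"
      by (rule measurable_cong_sets) (auto intro!: sets_pair_measure_cong)
    then show ?thesis using hb by simp
  qed
  have hx: "(\<lambda>t. h (x, t)) \<in> borel_measurable borel" for x
    using measurable_Pair2[OF hb, of x] by simp
  define K where "K = exp (\<alpha>^2 * Ba^2 + \<mu> * B^2) * exp (phi \<alpha> a (c * (1 + 4 * c * B^2)) y)"
  have "(\<integral>\<^sup>+ p. h p \<partial>distr M borel (\<lambda>\<omega>. (Xi \<omega>, e \<omega>)))
      = (\<integral>\<^sup>+ x. \<integral>\<^sup>+ t. h (x, t) \<partial>distr M borel e \<partial>distr M borel Xi)"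
    unfolding eq' by (rule PE.nn_integral_fst[OF hm, symmetric])
  also have "\<dots> = (\<integral>\<^sup>+ x. ennreal (1/2) * h (x, 1) + ennreal (1/2) * h (x, -1) \<partial>distr M borel Xi)"
    by (simp add: rademacher_nn_integral[OF P r hx])
  also have "\<dots> \<le> (\<integral>\<^sup>+ x. ennreal K \<partial>distr M borel Xi)"
  proof (rule nn_integral_mono_AE)
    show "AE x in distr M borel Xi. ennreal (1/2) * h (x, 1) + ennreal (1/2) * h (x, -1) \<le> ennreal K"
      using AEx
    proof (rule eventually_mono)
      fix x :: "real^'d" assume x: "norm x \<le> B \<and> \<bar>a \<bullet> x\<bar> \<le> Ba"
      have "ennreal (1/2) * h (x, 1) + ennreal (1/2) * h (x, -1)
          = ennreal ((exp (phi \<alpha> a c (y + x)) + exp (phi \<alpha> a c (y + - x))) / 2)"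
        unfolding h_def fst_conv snd_conv scaleR_one scaleR_minus1_left by (rule ennr_half) auto
      also have "\<dots> \<le> ennreal K"
        unfolding K_def using x c by (intro ennreal_leI step_pointwise) auto
      finally show "ennreal (1/2) * h (x, 1) + ennreal (1/2) * h (x, -1) \<le> ennreal K" .
    qed
  qed
  also have "\<dots> = ennreal K" by (subst nn_integral_const) (metis PX.emeasure_space_1 mult.right_neutral)
  finally show ?thesis unfolding h_def K_def .
qed

lemma G_le:
  fixes w a y :: "real^'d"
  assumes "norm a = 1" "w \<bullet> a = s"
  shows "w \<bullet> y - (norm w)^2 / 2 \<le> s * (a \<bullet> y) - s^2 / 2 + (norm y)^2 / 2"
proof -
  define u where "u = w - s *\<^sub>R a"
  have aa: "a \<bullet> a = 1" using assms(1) by (simp add: power2_norm_eq_inner[symmetric])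
  have ua: "u \<bullet> a = 0" unfolding u_def using assms(2) aa by (simp add: inner_diff_left)
  have w: "w = u + s *\<^sub>R a" by (simp add: u_def)
  have nw: "(norm w)^2 = (norm u)^2 + s^2"
    unfolding w power2_norm_eq_inner using ua aa
    by (simp add: inner_add_left inner_add_right inner_commute power2_eq_square)
  have wy: "w \<bullet> y = u \<bullet> y + s * (a \<bullet> y)" unfolding w by (simp add: inner_add_left)
  have "0 \<le> (norm (u - y))^2" by simp
  also have "(norm (u - y))^2 = (norm u)^2 - 2 * (u \<bullet> y) + (norm y)^2"
    by (simp add: power2_norm_eq_inner inner_diff_left inner_diff_right inner_commute)
  finally show ?thesis unfolding nw wy by (simp add: field_simps)
qed


theorem lemma4:
  fixes M :: "'a measure" and a :: "real^'d" and m :: nat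
    and X :: "nat \<Rightarrow> 'a \<Rightarrow> real^'d" and eps :: "nat \<Rightarrow> 'a \<Rightarrow> real"
    and B s \<mu> :: real
  assumes "prob_space M"
    and "norm a = 1"
    and "prob_space.indep_vars M (\<lambda>_. borel) (\<lambda>i \<omega>. (X i \<omega>, eps i \<omega>)) {..<m}"
    and "\<forall>i<m. X i \<in> borel_measurable M"
    and "\<forall>i<m. distr M (borel \<Otimes>\<^sub>M borel) (\<lambda>\<omega>. (X i \<omega>, eps i \<omega>))
                 = distr M borel (X i) \<Otimes>\<^sub>M distr M borel (eps i)"
    and "\<forall>i<m. distr M borel (X i) = distr M borel (X 0)"
    and "\<forall>i<m. rademacher M (eps i)"
    and "B > 0"
    and "\<forall>i<m. AE \<omega> in M. norm (X i \<omega>) \<le> B"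
    and "s > 0" and "\<mu> > 0"
    and "8 * \<mu> * real m * B\<^sup>2 \<le> 1"
  shows "(\<integral>\<^sup>+ \<omega>. (\<Squnion>w \<in> {s *\<^sub>R v | v. v \<bullet> a = 1}. ennreal (exp (\<mu> * Gfun m X eps w \<omega>))) \<partial>M)
    \<le> ennreal (exp ((real m * s\<^sup>2 * (ess_bound M (\<lambda>\<omega>. \<bar>a \<bullet> X 0 \<omega>\<bar>))\<^sup>2) * \<mu>\<^sup>2
                    + (5 * real m * B\<^sup>2 - s\<^sup>2 / 2) * \<mu>))"
proof -
  note P = assms(1) and na = assms(2) and ind = assms(3) and Xm = assms(4) and eqd = assms(5)
    and same = assms(6) and rad = assms(7) and B0 = assms(8) and XB = assms(9) and s0 = assms(10)
    and mu0 = assms(11) and small = assms(12)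
  interpret prob_space M by fact
  define Ba where "Ba = ess_bound M (\<lambda>\<omega>. \<bar>a \<bullet> X 0 \<omega>\<bar>)"
  define \<alpha> where "\<alpha> = \<mu> * s"
  define Yw where "Yw = (\<lambda>\<omega>. \<Sum>i<m. eps i \<omega> *\<^sub>R X i \<omega>)"
  have sup_le: "(\<Squnion>w \<in> {s *\<^sub>R v | v. v \<bullet> a = 1}. ennreal (exp (\<mu> * Gfun m X eps w \<omega>)))
      \<le> ennreal (exp (- \<mu> * s^2 / 2)) * ennreal (exp (phi \<alpha> a (\<mu>/2) (Yw \<omega>)))" for \<omega>
  proof (rule SUP_least)
    fix w assume "w \<in> {s *\<^sub>R v | v. v \<bullet> a = 1}"
    then obtain v where w: "w = s *\<^sub>R v" "v \<bullet> a = 1" by blast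
    have wa: "w \<bullet> a = s" using w by simp
    have Yw: "Yw \<omega> = (\<Sum>i<m. eps i \<omega> *\<^sub>R X i \<omega>)" by (simp add: Yw_def)
    have "\<mu> * Gfun m X eps w \<omega> \<le> \<mu> * (s * (a \<bullet> Yw \<omega>) - s^2 / 2 + (norm (Yw \<omega>))^2 / 2)"
      unfolding Gfun_def Yw[symmetric] using G_le[OF na wa, of "Yw \<omega>"] mu0
      by (intro mult_left_mono) auto
    also have "\<dots> = - \<mu> * s^2 / 2 + phi \<alpha> a (\<mu>/2) (Yw \<omega>)"
      by (simp add: phi_def \<alpha>_def algebra_simps)
    finally have le: "\<mu> * Gfun m X eps w \<omega> \<le> - \<mu> * s^2 / 2 + phi \<alpha> a (\<mu>/2) (Yw \<omega>)" .
    have "ennreal (exp (\<mu> * Gfun m X eps w \<omega>)) \<le> ennreal (exp (- \<mu> * s^2 / 2 + phi \<alpha> a (\<mu>/2) (Yw \<omega>)))"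
      using le by (intro ennreal_leI) simp
    also have "\<dots> = ennreal (exp (- \<mu> * s^2 / 2)) * ennreal (exp (phi \<alpha> a (\<mu>/2) (Yw \<omega>)))"
      unfolding exp_add by (rule ennreal_mult) auto
    finally show "ennreal (exp (\<mu> * Gfun m X eps w \<omega>))
        \<le> ennreal (exp (- \<mu> * s^2 / 2)) * ennreal (exp (phi \<alpha> a (\<mu>/2) (Yw \<omega>)))" .
  qed
  have final: "ennreal (exp (- \<mu> * s^2 / 2)) * ennreal (exp (real m * (\<alpha>^2 * Ba^2 + \<mu> * B^2)))
      \<le> ennreal (exp ((real m * s\<^sup>2 * Ba\<^sup>2) * \<mu>\<^sup>2 + (5 * real m * B\<^sup>2 - s\<^sup>2 / 2) * \<mu>))"
  proof -
    have "real m * (\<mu> * B^2) \<le> real m * (5 * \<mu> * B^2)"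
      using mu0 by (intro mult_left_mono) auto
    then have le: "- \<mu> * s^2 / 2 + real m * (\<alpha>^2 * Ba^2 + \<mu> * B^2)
        \<le> (real m * s\<^sup>2 * Ba\<^sup>2) * \<mu>\<^sup>2 + (5 * real m * B\<^sup>2 - s\<^sup>2 / 2) * \<mu>"
      by (simp add: \<alpha>_def power_mult_distrib algebra_simps)
    have "ennreal (exp (- \<mu> * s^2 / 2)) * ennreal (exp (real m * (\<alpha>^2 * Ba^2 + \<mu> * B^2)))
        = ennreal (exp (- \<mu> * s^2 / 2 + real m * (\<alpha>^2 * Ba^2 + \<mu> * B^2)))"
      unfolding exp_add by (rule ennreal_mult[symmetric]) auto
    also have "\<dots> \<le> ennreal (exp ((real m * s\<^sup>2 * Ba\<^sup>2) * \<mu>\<^sup>2 + (5 * real m * B\<^sup>2 - s\<^sup>2 / 2) * \<mu>))"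
      using le by (intro ennreal_leI) simp
    finally show ?thesis .
  qed
  show ?thesis
  proof (cases "m = 0")
    case True
    have "(\<integral>\<^sup>+ \<omega>. (\<Squnion>w \<in> {s *\<^sub>R v | v. v \<bullet> a = 1}. ennreal (exp (\<mu> * Gfun m X eps w \<omega>))) \<partial>M)
        \<le> (\<integral>\<^sup>+ \<omega>. ennreal (exp (- \<mu> * s^2 / 2)) * ennreal (exp (phi \<alpha> a (\<mu>/2) (Yw \<omega>))) \<partial>M)"
      by (intro nn_integral_mono sup_le)
    also have "\<dots> = ennreal (exp (- \<mu> * s^2 / 2))"
      using True by (simp add: Yw_def phi_def emeasure_space_1)
    also have "\<dots> \<le> ennreal (exp ((real m * s\<^sup>2 * Ba\<^sup>2) * \<mu>\<^sup>2 + (5 * real m * B\<^sup>2 - s\<^sup>2 / 2) * \<mu>))"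
      using True by simp
    finally show ?thesis unfolding Ba_def .
  next
    case False
    then have m0: "0 < m" by simp
    have Xm0[measurable]: "X 0 \<in> borel_measurable M" using Xm m0 by auto
    have Zm: "(\<lambda>\<omega>. (X i \<omega>, eps i \<omega>)) \<in> borel_measurable M" if "i < m" for i
    proof -
      have [measurable]: "X i \<in> borel_measurable M" using Xm that by auto
      have [measurable]: "eps i \<in> borel_measurable M" using rad that by (auto simp: rademacher_def)
      show ?thesis by measurable
    qed
    have AE_Ba: "AE \<omega> in M. \<bar>a \<bullet> X 0 \<omega>\<bar> \<le> Ba"
      unfolding Ba_def
    proof (rule AE_le_ess_bound[OF P])
      show "AE \<omega> in M. \<bar>a \<bullet> X 0 \<omega>\<bar> \<le> B"
        using XB m0
      proof -
        have "AE \<omega> in M. norm (X 0 \<omega>) \<le> B" using XB m0 by auto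
        then show ?thesis
        proof (rule eventually_mono)
          fix \<omega> assume "norm (X 0 \<omega>) \<le> B"
          then show "\<bar>a \<bullet> X 0 \<omega>\<bar> \<le> B" using Cauchy_Schwarz_ineq2[of a "X 0 \<omega>"] na by simp
        qed
      qed
    qed simp
    have AEx: "AE x in distr M borel (X i). norm x \<le> B \<and> \<bar>a \<bullet> x\<bar> \<le> Ba" if i: "i < m" for i
    proof -
      have [measurable]: "X i \<in> borel_measurable M" using Xm i by auto
      have 0: "AE x in distr M borel (X 0). \<bar>a \<bullet> x\<bar> \<le> Ba"
        using AE_Ba by (subst AE_distr_iff) auto
      have 1: "AE x in distr M borel (X i). \<bar>a \<bullet> x\<bar> \<le> Ba" 
      proof -
        have e: "distr M borel (X i) = distr M borel (X 0)" using same i by blast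
        show ?thesis unfolding e by (rule 0)
      qed
      have 2: "AE x in distr M borel (X i). norm x \<le> B"
        using XB i by (subst AE_distr_iff) auto
      show ?thesis using 1 2 by eventually_elim auto
    qed
    define N where "N = (\<lambda>i. if i < m then distr M borel (\<lambda>\<omega>. (X i \<omega>, eps i \<omega>))
                              else return borel (0 :: real^'d, 0::real))"
    have PS: "prob_space (N i)" for i
      unfolding N_def using Zm by (auto intro!: prob_space_distr prob_space_return)
    have setsN: "sets (N i) = sets borel" for i
      unfolding N_def by simp
    define K where "K = \<alpha>^2 * Ba^2 + \<mu> * B^2"
    have stepN: "(\<integral>\<^sup>+ p. ennreal (exp (phi \<alpha> a c (y + snd p *\<^sub>R fst p))) \<partial>N i)
         \<le> ennreal (exp K * exp (phi \<alpha> a (c * (1 + 4 * c * B^2)) y))"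
      if "i < m" "0 \<le> c" "c \<le> \<mu>" for i y c
      unfolding K_def N_def using that Xm eqd rad AEx
      by (simp del: ennreal_mult' add: stepN_lemma[OF P])
    have gm: "((\<lambda>x. x * (1 + 4 * x * B^2)) ^^ m) (\<mu>/2) \<le> \<mu>"
    proof -
      have "(1 + 8 * (\<mu>/2) * B^2)^m \<le> exp (4 * \<mu> * B^2) ^ m"
        by (intro power_mono) (use mu0 in \<open>auto intro: exp_ge_add_one_self_aux\<close>)
      also have "\<dots> = exp (real m * (4 * \<mu> * B^2))" by (simp add: exp_of_nat_mult)
      also have "\<dots> \<le> exp (1/2)" using small by (simp add: algebra_simps)
      also have "\<dots> \<le> 2" by (rule exp_half_le2)
      finally have r2: "(1 + 8 * (\<mu>/2) * B^2)^m \<le> 2" .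
      have "((\<lambda>x. x * (1 + 4 * x * B^2)) ^^ m) (\<mu>/2) \<le> (\<mu>/2) * (1 + 8 * (\<mu>/2) * B^2)^m"
        using funpow_bound[of "\<mu>/2" B m m] r2 mu0 by auto
      also have "\<dots> \<le> (\<mu>/2) * 2" using r2 mu0 by (intro mult_left_mono) auto
      finally show ?thesis by simp
    qed
    have prod: "(\<integral>\<^sup>+ z. ennreal (exp (phi \<alpha> a (\<mu>/2) (\<Sum>i<m. snd (z i) *\<^sub>R fst (z i)))) \<partial>PiM {..<m} N)
      \<le> ennreal (exp (real m * K))"
      by (rule prod_induct[OF PS setsN stepN]) (use gm mu0 in auto)
    define T where "T = (\<lambda>\<omega>. \<lambda>i\<in>{..<m}. (X i \<omega>, eps i \<omega>))"
    have Tm: "T \<in> measurable M (PiM {..<m} (\<lambda>_. borel))"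
      unfolding T_def using Zm by (intro measurable_restrict) auto
    have distr_eq: "distr M (PiM {..<m} (\<lambda>_. borel)) T = PiM {..<m} N"
    proof -
      have "distr M (PiM {..<m} (\<lambda>_. borel)) T = PiM {..<m} (\<lambda>i. distr M borel (\<lambda>\<omega>. (X i \<omega>, eps i \<omega>)))"
        unfolding T_def using ind m0 Zm by (subst indep_vars_iff_distr_eq_PiM'[symmetric]) auto
      also have "\<dots> = PiM {..<m} N" by (intro PiM_cong) (auto simp: N_def)
      finally show ?thesis .
    qed
    define C where "C = ennreal (exp (- \<mu> * s^2 / 2))"
    define F where "F = (\<lambda>z::nat \<Rightarrow> (real^'d) \<times> real. ennreal (exp (phi \<alpha> a (\<mu>/2) (\<Sum>i<m. snd (z i) *\<^sub>R fst (z i)))))"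
    have Fm: "F \<in> borel_measurable (PiM {..<m} (\<lambda>_. borel))"
      unfolding F_def using measurable_compose[OF Y_meas[where N="\<lambda>_. borel" and n=m and I="{..<m}", OF refl order.refl] phi_meas[of \<alpha> a "\<mu>/2"]] by (auto simp: o_def)
    have FmN: "F \<in> borel_measurable (PiM {..<m} N)"
      unfolding F_def using measurable_compose[OF Y_meas[where N=N and n=m and I="{..<m}", OF setsN order.refl] phi_meas[of \<alpha> a "\<mu>/2"]] by (auto simp: o_def)
    have FT: "F (T \<omega>) = ennreal (exp (phi \<alpha> a (\<mu>/2) (Yw \<omega>)))" for \<omega>
    proof -
      have "(\<Sum>i<m. snd (T \<omega> i) *\<^sub>R fst (T \<omega> i)) = Yw \<omega>"
        unfolding T_def Yw_def by (rule sum.cong) auto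
      then show ?thesis unfolding F_def by (simp only:)
    qed
    have "(\<integral>\<^sup>+ \<omega>. (\<Squnion>w \<in> {s *\<^sub>R v | v. v \<bullet> a = 1}. ennreal (exp (\<mu> * Gfun m X eps w \<omega>))) \<partial>M)
        \<le> (\<integral>\<^sup>+ \<omega>. C * F (T \<omega>) \<partial>M)"
      unfolding FT C_def by (intro nn_integral_mono sup_le)
    also have "\<dots> = (\<integral>\<^sup>+ z. C * F z \<partial>distr M (PiM {..<m} (\<lambda>_. borel)) T)"
      using Fm Tm by (subst nn_integral_distr) auto
    also have "\<dots> = C * (\<integral>\<^sup>+ z. F z \<partial>PiM {..<m} N)"
      unfolding distr_eq by (rule nn_integral_cmult[OF FmN])
    also have "\<dots> \<le> C * ennreal (exp (real m * K))"
      using prod unfolding F_def by (rule mult_left_mono) simp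
    also have "\<dots> \<le> ennreal (exp ((real m * s\<^sup>2 * Ba\<^sup>2) * \<mu>\<^sup>2 + (5 * real m * B\<^sup>2 - s\<^sup>2 / 2) * \<mu>))"
      using final unfolding C_def K_def .
    finally show ?thesis unfolding Ba_def .
  qed
qed

end
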